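(* Let $0<\eta<1$, $\gamma_0=0$ and $\gamma_j=(1+\eta\gamma_{j-1}^2)/2$ for $j\ge1$. Let $I_0=(0,1/4]$, and for $k\ge1$, $I_k=(\alpha_k,\beta_k]$ with $\alpha_k=2\gamma_{k+1}-1$, $\beta_k=\gamma_k^2$; for $j\ge0$ let $J_j=(\gamma_j,\gamma_{j+1}]$. Then there is no pair $(k,j)$ with $J_j\subset I_k$. Consequently each interval $I_k$ meets at most two of the intervals $J_j$.
   Context: Intervals $(a,b]$ are open on the left and closed on the right. *)

theory Defs
  imports Complex_Main
begin

fun gam :: "real \<Rightarrow> nat \<Rightarrow> real" where
  "gam \<eta> 0 = 0"
| "gam \<eta> (Suc j) = (1 + \<eta> * (gam \<eta> j)\<^sup>2) / 2"

definition Iint :: "real \<Rightarrow> nat \<Rightarrow> real set" where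
  "Iint \<eta> k = (if k = 0 then {0<..1/4}
               else {2 * gam \<eta> (k + 1) - 1 <.. (gam \<eta> k)\<^sup>2})"

definition Jint :: "real \<Rightarrow> nat \<Rightarrow> real set" where
  "Jint \<eta> j = {gam \<eta> j <.. gam \<eta> (j + 1)}"

end

theory Submission
  imports Defs
begin

lemma gam_nonneg: "0 \<le> \<eta> \<Longrightarrow> 0 \<le> gam \<eta> j"
  by (cases j) auto

lemma key:
  fixes \<eta> y :: real
  assumes "0 < \<eta>" "\<eta> < 1" "0 \<le> y" "y < 1" "2*y \<le> 1 + \<eta>*y^2"
  shows "2*y^2 < 1 + \<eta>^3*y^4"
proof (cases "2*y < 1")
  case True
  have "y*y \<le> (1/2)*(1/2)" using True assms(3) by (intro mult_mono) auto
  hence "y^2 \<le> 1/4" by (simp add: power2_eq_square)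
  moreover have "0 \<le> \<eta>^3*y^4" using assms by simp
  ultimately show ?thesis by simp
next
  case False
  have a: "0 \<le> 2*y - 1" using False by simp
  have "(2*y-1)^3 \<le> (\<eta>*y^2)^3" using a assms(5) by (intro power_mono) auto
  hence b: "(2*y-1)^3 \<le> \<eta>^3*y^6" by (simp add: power_mult_distrib power_mult[symmetric])
  have c: "0 < (y-1)^2*(-2*y^2+4*y-1)"
  proof -
    have "0 < (y-1)^2" using assms by simp
    moreover have "0 < -2*y^2+4*y-1"
    proof -
      have "(1-y)*(1-y) \<le> (1/2)*(1/2)" using a assms(4) by (intro mult_mono) auto
      thus ?thesis by (simp add: power2_eq_square algebra_simps)
    qed
    ultimately show ?thesis by simp
  qed
  have "y^2 * (2*y^2) < y^2*(1 + \<eta>^3*y^4)"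
  proof -
    have "y^2*(1 + \<eta>^3*y^4) - y^2 * (2*y^2) = y^2 + \<eta>^3*y^6 - 2*y^4"
      by (simp add: algebra_simps power_add[symmetric] numeral_eq_Suc)
    also have "\<dots> \<ge> y^2 + (2*y-1)^3 - 2*y^4" using b by simp
    also have "y^2 + (2*y-1)^3 - 2*y^4 = (y-1)^2*(-2*y^2+4*y-1)"
      by (simp add: algebra_simps power2_eq_square power3_eq_cube numeral_eq_Suc)
    finally show ?thesis using c by simp
  qed
  moreover have "0 < y^2" using False by simp
  ultimately show ?thesis by simp
qed

lemma gam_lt1: assumes "0 < \<eta>" "\<eta> < 1" shows "gam \<eta> j < 1"
proof (induction j)
  case 0 then show ?case by simp
next
  case (Suc j)
  have g: "0 \<le> gam \<eta> j" using gam_nonneg assms by simp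
  have "gam \<eta> j * gam \<eta> j \<le> 1 * 1" using g Suc by (intro mult_mono) auto
  hence "(gam \<eta> j)^2 \<le> 1" by (simp add: power2_eq_square)
  hence "\<eta> * (gam \<eta> j)^2 \<le> \<eta> * 1" using assms mult_left_mono[of "(gam \<eta> j)^2" 1 \<eta>] by simp
  hence "\<eta> * (gam \<eta> j)^2 < 1" using assms by linarith
  then show ?case by simp
qed

lemma gam_step: assumes "0 < \<eta>" shows "gam \<eta> j < gam \<eta> (Suc j)"
proof (induction j)
  case 0 then show ?case by simp
next
  case (Suc j)
  have g: "0 \<le> gam \<eta> j" using gam_nonneg assms by simp
  have "gam \<eta> j * gam \<eta> j < gam \<eta> (Suc j) * gam \<eta> (Suc j)" using g Suc
    by (intro mult_strict_mono) auto
  hence "\<eta> * (gam \<eta> j)^2 < \<eta> * (gam \<eta> (Suc j))^2" using assms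
    by (simp add: power2_eq_square)
  then show ?case by simp
qed

lemma gam_smono: assumes "0 < \<eta>" shows "strict_mono (gam \<eta>)"
  using gam_step[OF assms] strict_mono_Suc_iff by blast

lemma gam_ge_half: assumes "0 < \<eta>" shows "1/2 \<le> gam \<eta> (Suc j)"
proof -
  have "0 \<le> \<eta> * (gam \<eta> j)^2" using assms by simp
  thus ?thesis by simp
qed

lemma sub_iff:
  fixes a b c d :: real
  assumes "a < b" "{a<..b} \<subseteq> {c<..d}" shows "c \<le> a \<and> b \<le> d"
proof
  show "b \<le> d" using assms by auto
  show "c \<le> a"
  proof (rule ccontr)
    assume "\<not> c \<le> a"
    hence "min c b \<in> {a<..b}" using assms(1) by auto
    with assms(2) have "min c b \<in> {c<..d}" by blast
    thus False by simp
  qed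
qed

lemma Iint_form: "\<exists>l u. Iint \<eta> k = {l<..u}"
  unfolding Iint_def by auto

lemma noJsub:
  assumes "0 < \<eta>" "\<eta> < 1"
  shows "\<not> (Jint \<eta> j \<subseteq> Iint \<eta> k)"
proof
  assume H: "Jint \<eta> j \<subseteq> Iint \<eta> k"
  have lt: "gam \<eta> j < gam \<eta> (j+1)" using gam_step[OF assms(1)] by simp
  show False
  proof (cases "k = 0")
    case True
    have I: "Iint \<eta> k = {0<..1/4}" unfolding Iint_def using True by simp
    have "0 \<le> gam \<eta> j \<and> gam \<eta> (j+1) \<le> 1/4"
      by (rule sub_iff[OF lt]) (use H in \<open>simp only: I Jint_def\<close>)
    hence "gam \<eta> (Suc j) \<le> 1/4" by simp
    then show False
    using gam_ge_half[OF assms(1), of j] by linarith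
  next
    case False
    let ?y = "gam \<eta> k"
    have e: "2 * gam \<eta> (k + 1) - 1 = \<eta> * ?y^2" by (simp add: field_simps)
    have I: "Iint \<eta> k = {2 * gam \<eta> (k + 1) - 1<..?y^2}" unfolding Iint_def using False by (simp del: gam.simps)
    have c: "\<eta> * ?y^2 \<le> gam \<eta> j \<and> gam \<eta> (j+1) \<le> ?y^2"
      by (rule sub_iff[OF lt]) (use H in \<open>simp only: I e Jint_def\<close>)
    have y0: "0 \<le> ?y" using gam_nonneg assms by simp
    have y1: "?y < 1" using gam_lt1 assms by simp
    have "?y \<le> gam \<eta> (Suc k)" using gam_step[OF assms(1)] less_imp_le by blast
    hence y2: "2 * ?y \<le> 1 + \<eta> * ?y^2" by simp
    have K: "2*?y^2 < 1 + \<eta>^3*?y^4" using key[OF assms y0 y1 y2] .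
    have p: "0 \<le> \<eta> * ?y^2" using assms by simp
    have "(\<eta> * ?y^2) * (\<eta> * ?y^2) \<le> gam \<eta> j * gam \<eta> j"
      using c p by (intro mult_mono) auto
    hence "\<eta>^2 * ?y^4 \<le> (gam \<eta> j)^2"
      by (simp add: power2_eq_square power4_eq_xxxx algebra_simps)
    hence "\<eta> * (\<eta>^2 * ?y^4) \<le> \<eta> * (gam \<eta> j)^2" using assms
      by (intro mult_left_mono) auto
    hence "\<eta>^3*?y^4 \<le> \<eta> * (gam \<eta> j)^2" by (simp add: power3_eq_cube power2_eq_square algebra_simps)
    hence "?y^2 < gam \<eta> (Suc j)" using K by simp
    with c show False by simp
  qed
qed

lemma convex_J:
  assumes "0 < \<eta>" "a < b" "b < c"
    "Jint \<eta> a \<inter> Iint \<eta> k \<noteq> {}" "Jint \<eta> c \<inter> Iint \<eta> k \<noteq> {}"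
  shows "Jint \<eta> b \<subseteq> Iint \<eta> k"
proof -
  obtain l u where I: "Iint \<eta> k = {l<..u}" using Iint_form by blast
  have sm: "strict_mono (gam \<eta>)" using gam_smono[OF assms(1)] .
  have m: "mono (gam \<eta>)" using sm strict_mono_mono by blast
  obtain p where p: "p \<in> Jint \<eta> a" "p \<in> Iint \<eta> k" using assms(4) by blast
  obtain q where q: "q \<in> Jint \<eta> c" "q \<in> Iint \<eta> k" using assms(5) by blast
  have "gam \<eta> (a+1) \<le> gam \<eta> b" using strict_mono_less_eq[OF sm, of "a+1" b] assms(2) by linarith
  moreover have "gam \<eta> (b+1) \<le> gam \<eta> c" using strict_mono_less_eq[OF sm, of "b+1" c] assms(3) by linarith
  ultimately show ?thesis using p q unfolding I Jint_def by auto
qed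

theorem mainTheorem15:
  fixes \<eta> :: real
  assumes "0 < \<eta>" and "\<eta> < 1"
  shows "(\<forall>k j. \<not> (Jint \<eta> j \<subseteq> Iint \<eta> k))
       \<and> (\<forall>k. finite {j. Jint \<eta> j \<inter> Iint \<eta> k \<noteq> {}}
               \<and> card {j. Jint \<eta> j \<inter> Iint \<eta> k \<noteq> {}} \<le> 2)"
proof (intro conjI allI)
  fix k j show "\<not> (Jint \<eta> j \<subseteq> Iint \<eta> k)" using noJsub[OF assms] .
next
  fix k
  let ?S = "{j. Jint \<eta> j \<inter> Iint \<eta> k \<noteq> {}}"
  have "finite ?S \<and> card ?S \<le> 2"
  proof (cases "?S = {}")
    case True then show ?thesis by simp
  next
    case False
    define a where "a = (LEAST j. j \<in> ?S)"
    have aS: "a \<in> ?S" using False unfolding a_def by (metis LeastI_ex all_not_in_conv)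
    have sub: "?S \<subseteq> {a, Suc a}"
    proof
      fix c assume cS: "c \<in> ?S"
      have "a \<le> c" unfolding a_def using cS by (rule Least_le)
      moreover have "\<not> Suc a < c"
      proof
        assume "Suc a < c"
        hence "Jint \<eta> (Suc a) \<subseteq> Iint \<eta> k" using convex_J[OF assms(1), of a "Suc a" c k] aS cS by auto
        with noJsub[OF assms] show False by blast
      qed
      ultimately show "c \<in> {a, Suc a}" by auto
    qed
    have "finite ?S" using sub finite_subset by blast
    moreover have "card ?S \<le> card {a, Suc a}" using sub by (intro card_mono) auto
    ultimately show ?thesis by simp
  qed
  thus "finite ?S" "card ?S \<le> 2" by auto
qed

end
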